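(* Let $\Sigma_1,\Sigma_2$ be systems as in the context. If $\Sigma_1$ and $\Sigma_2$ have equivalent stochastic external behavior with respect to some subspace $\mathcal R\subseteq\mathbb R^{n_1+n_2}$, then: $(p_0)$ $\Psi_1=\Psi_2$; $(p_1)$ $C_1A_1^tB_1=C_2A_2^tB_2$ for all $t\ge0$; $(p_2)$ $C_1A_1^tG_1\mu_1=C_2A_2^tG_2\mu_2$ for all $t\ge0$; $(p_3)$ $C_1A_1^kG_1G_1^T(A_1^h)^TC_1^T=C_2A_2^kG_2G_2^T(A_2^h)^TC_2^T$ for all $h,k\ge0$.
   Context: For $i=1,2$, $\Sigma_i$ is the system $x_i(t+1)=A_ix_i(t)+B_iu(t)+G_iw_i(t)$, $y_i(t)=C_ix_i(t)+\nu_i(t)$, $t\in\mathbb{N}$, with $x_i\in\mathbb{R}^{n_i}$, $u\in\mathbb{R}^m$, $w_i\in\mathbb{R}^{l_i}$, $y_i,\nu_i\in\mathbb{R}^p$, where $(w_i(t))_t$ is i.i.d. with $w_i(t)\sim\mathcal N(\mu_i,I_{l_i})$, $(\nu_i(t))_t$ is i.i.d. with $\nu_i(t)\sim\mathcal N(0,\Psi_i)$, and the two sequences are mutually independent. For a deterministic initial state $x_i^0$ and deterministic input $\mathbf u:\mathbb N\to\mathbb R^m$, $\mathbf x_i|_{x_i^0,\mathbf u}(t)=A_i^tx_i^0+\sum_{\tau=0}^{t-1}A_i^{t-1-\tau}(B_iu(\tau)+G_iw_i(\tau))$, $\mathbf y_i|_{x_i^0,\mathbf u}(t)=C_i\mathbf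 x_i|_{x_i^0,\mathbf u}(t)+\nu_i(t)$. Processes are stochastically equivalent ($\sim$) if all finite-dimensional joint distributions coincide. For a subspace $\mathcal R\subseteq\mathbb R^{n_1}\times\mathbb R^{n_2}$, $\Sigma_1,\Sigma_2$ have equivalent stochastic external behavior with respect to $\mathcal R$ if $\mathbf y_1|_{x_1^0,\mathbf u}\sim\mathbf y_2|_{x_2^0,\mathbf u}$ for all $(x_1^0,x_2^0)\in\mathcal R$ and all inputs $\mathbf u$. *)

theory Defs
  imports "HOL-Probability.Probability"
begin

primrec mpow :: "real^'n^'n \<Rightarrow> nat \<Rightarrow> real^'n^'n" where
  "mpow A 0 = mat 1"
| "mpow A (Suc t) = A ** mpow A t"

definition gaussian_vec :: "real^'n \<Rightarrow> real^'n^'n \<Rightarrow> (real^'n) measure \<Rightarrow> bool" where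
  "gaussian_vec mu S N \<longleftrightarrow>
     prob_space N \<and> sets N = sets borel \<and> transpose S = S \<and>
     (\<forall>a. integral\<^sup>L N (\<lambda>x. cis (a \<bullet> x)) =
          cis (a \<bullet> mu) * complex_of_real (exp (- (a \<bullet> (S *v a)) / 2)))"

definition noise_model ::
  "'a measure \<Rightarrow> real^'l \<Rightarrow> real^'p^'p \<Rightarrow> (nat \<Rightarrow> 'a \<Rightarrow> real^'l) \<Rightarrow> (nat \<Rightarrow> 'a \<Rightarrow> real^'p) \<Rightarrow> bool"
  where
  "noise_model M mu Psi w nu \<longleftrightarrow>
     prob_space M \<and>
     (\<forall>t. w t \<in> borel_measurable M \<and> nu t \<in> borel_measurable M) \<and>
     (\<forall>t. gaussian_vec mu (mat 1) (distr M borel (w t))) \<and>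
     (\<forall>t. gaussian_vec 0 Psi (distr M borel (nu t))) \<and>
     prob_space.indep_vars M (\<lambda>_. borel) w UNIV \<and>
     prob_space.indep_vars M (\<lambda>_. borel) nu UNIV \<and>
     prob_space.indep_set M
       (sets (vimage_algebra (space M) (\<lambda>\<omega> t. w t \<omega>) (PiM UNIV (\<lambda>_. borel))))
       (sets (vimage_algebra (space M) (\<lambda>\<omega> t. nu t \<omega>) (PiM UNIV (\<lambda>_. borel))))"

definition state_proc ::
  "real^'n^'n \<Rightarrow> real^'m^'n \<Rightarrow> real^'l^'n \<Rightarrow> real^'n \<Rightarrow> (nat \<Rightarrow> real^'m)
   \<Rightarrow> (nat \<Rightarrow> 'a \<Rightarrow> real^'l) \<Rightarrow> nat \<Rightarrow> 'a \<Rightarrow> real^'n" where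
  "state_proc A B G x0 u w t \<omega> =
     mpow A t *v x0 + (\<Sum>\<tau><t. mpow A (t - 1 - \<tau>) *v (B *v u \<tau> + G *v w \<tau> \<omega>))"

definition output_proc ::
  "real^'n^'n \<Rightarrow> real^'m^'n \<Rightarrow> real^'l^'n \<Rightarrow> real^'n^'p \<Rightarrow> real^'n \<Rightarrow> (nat \<Rightarrow> real^'m)
   \<Rightarrow> (nat \<Rightarrow> 'a \<Rightarrow> real^'l) \<Rightarrow> (nat \<Rightarrow> 'a \<Rightarrow> real^'p) \<Rightarrow> nat \<Rightarrow> 'a \<Rightarrow> real^'p" where
  "output_proc A B G C x0 u w nu t \<omega> = C *v state_proc A B G x0 u w t \<omega> + nu t \<omega>"

definition stoch_equiv ::
  "'a measure \<Rightarrow> (nat \<Rightarrow> 'a \<Rightarrow> 'c::topological_space) \<Rightarrow> 'b measure \<Rightarrow> (nat \<Rightarrow> 'b \<Rightarrow> 'c) \<Rightarrow> bool" where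
  "stoch_equiv M1 Y1 M2 Y2 \<longleftrightarrow>
     (\<forall>J. finite J \<longrightarrow>
        distr M1 (PiM J (\<lambda>_. borel)) (\<lambda>\<omega>. \<lambda>t\<in>J. Y1 t \<omega>) =
        distr M2 (PiM J (\<lambda>_. borel)) (\<lambda>\<omega>. \<lambda>t\<in>J. Y2 t \<omega>))"

end

theory Submission
  imports Defs
begin



lemma mvsum: "A *v (\<Sum>i\<in>S. f i) = (\<Sum>i\<in>S. A *v f i)" for A :: "real^'n^'m"
  using linear_sum[OF matrix_vector_mul_linear[of A]] by simp

lemma dot3: "(a::real^'p) \<bullet> (C *v (M *v (G *v x))) = (transpose (C ** M ** G) *v a) \<bullet> x"
  by (simp add: matrix_vector_mul_assoc matrix_mul_assoc) (simp add: dot_lmul_matrix inner_commute[of x])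

definition bb :: "real^'n^'n \<Rightarrow> real^'l^'n \<Rightarrow> real^'n^'p \<Rightarrow> nat set \<Rightarrow> (nat \<Rightarrow> real^'p) \<Rightarrow> nat \<Rightarrow> real^'l"
  where "bb A G C J a \<tau> = (\<Sum>t\<in>J. if \<tau> < t then transpose (C ** mpow A (t - 1 - \<tau>) ** G) *v a t else 0)"

lemma sum_lt_N: "(\<forall>t\<in>J. t \<le> (N::nat)) \<Longrightarrow> t \<in> J \<Longrightarrow> (\<Sum>\<tau><t. f \<tau>) = (\<Sum>\<tau><N. if \<tau> < t then f \<tau> else (0::'b::comm_monoid_add))"
  by (rule sum.mono_neutral_cong_left) (auto dest!: bspec)

lemma pointwise:
  assumes fin: "finite J" and N: "\<forall>t\<in>J. t \<le> N"
  shows "(\<Sum>t\<in>J. a t \<bullet> output_proc A B G C 0 u w nu t \<omega>) =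
    (\<Sum>t\<in>J. a t \<bullet> (C *v (\<Sum>\<tau><t. mpow A (t - 1 - \<tau>) *v (B *v u \<tau>))))
    + (\<Sum>\<tau><N. bb A G C J a \<tau> \<bullet> w \<tau> \<omega>) + (\<Sum>t\<in>J. a t \<bullet> nu t \<omega>)"
proof -
  have e1: "a t \<bullet> output_proc A B G C 0 u w nu t \<omega> =
     a t \<bullet> (C *v (\<Sum>\<tau><t. mpow A (t - 1 - \<tau>) *v (B *v u \<tau>)))
     + (\<Sum>\<tau><t. (transpose (C ** mpow A (t - 1 - \<tau>) ** G) *v a t) \<bullet> w \<tau> \<omega>) + a t \<bullet> nu t \<omega>" for t
    by (simp add: output_proc_def state_proc_def matrix_vector_right_distrib sum.distrib mvsum
        inner_add_right inner_sum_right dot3)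
  have e2: "(\<Sum>t\<in>J. \<Sum>\<tau><t. (transpose (C ** mpow A (t - 1 - \<tau>) ** G) *v a t) \<bullet> w \<tau> \<omega>)
      = (\<Sum>\<tau><N. bb A G C J a \<tau> \<bullet> w \<tau> \<omega>)"
  proof -
    have "(\<Sum>t\<in>J. \<Sum>\<tau><t. (transpose (C ** mpow A (t - 1 - \<tau>) ** G) *v a t) \<bullet> w \<tau> \<omega>)
      = (\<Sum>t\<in>J. \<Sum>\<tau><N. (if \<tau> < t then transpose (C ** mpow A (t - 1 - \<tau>) ** G) *v a t else 0) \<bullet> w \<tau> \<omega>)"
      apply (rule sum.cong[OF refl])
      apply (subst sum_lt_N[OF N], assumption)
      by (rule sum.cong) auto
    also have "\<dots> = (\<Sum>\<tau><N. \<Sum>t\<in>J. (if \<tau> < t then transpose (C ** mpow A (t - 1 - \<tau>) ** G) *v a t else 0) \<bullet> w \<tau> \<omega>)"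
      by (rule sum.swap)
    also have "\<dots> = (\<Sum>\<tau><N. bb A G C J a \<tau> \<bullet> w \<tau> \<omega>)"
      unfolding bb_def inner_sum_left by (rule sum.cong[OF refl], rule sum.cong[OF refl]) simp
    finally show ?thesis .
  qed
  show ?thesis
    by (simp only: e1 sum.distrib e2)
qed




lemma cis_sum: "finite S \<Longrightarrow> (\<Prod>i\<in>S. cis (f i)) = cis (\<Sum>i\<in>S. f i)"
  by (induction S rule: finite_induct) (auto simp: cis_mult)

lemma gauss_int:
  assumes "gaussian_vec mu S (distr M borel X)" "X \<in> borel_measurable M"
  shows "(\<integral>\<omega>. cis (b \<bullet> X \<omega>) \<partial>M) = cis (b \<bullet> mu) * complex_of_real (exp (- (b \<bullet> (S *v b)) / 2))"
proof -
  have "(\<integral>\<omega>. cis (b \<bullet> X \<omega>) \<partial>M) = integral\<^sup>L (distr M borel X) (\<lambda>x. cis (b \<bullet> x))"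
    by (subst integral_distr) (use assms(2) in \<open>auto intro!: borel_measurable_continuous_onI continuous_intros\<close>)
  then show ?thesis using assms(1) unfolding gaussian_vec_def by auto
qed

lemma (in prob_space) vimage_sub:
  assumes W: "W \<in> M \<rightarrow>\<^sub>M P" and f: "f \<in> P \<rightarrow>\<^sub>M (N::'e measure)"
  shows "sigma_sets (space M) {(\<lambda>\<omega>. f (W \<omega>)) -` A \<inter> space M | A. A \<in> sets N}
      \<subseteq> sets (vimage_algebra (space M) W P)"
proof -
  have "{(\<lambda>\<omega>. f (W \<omega>)) -` A \<inter> space M | A. A \<in> sets N} \<subseteq> sets (vimage_algebra (space M) W P)"
  proof
    fix S assume "S \<in> {(\<lambda>\<omega>. f (W \<omega>)) -` A \<inter> space M | A. A \<in> sets N}"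
    then obtain A where A: "A \<in> sets N" "S = (\<lambda>\<omega>. f (W \<omega>)) -` A \<inter> space M" by auto
    have "S = W -` (f -` A \<inter> space P) \<inter> space M" using A measurable_space[OF W] by auto
    moreover have "f -` A \<inter> space P \<in> sets P" using A f by (auto intro: measurable_sets)
    moreover have eq: "sets (vimage_algebra (space M) W P) = {W -` A \<inter> space M | A. A \<in> sets P}"
      by (rule sets_vimage_algebra2) (use measurable_space[OF W] in auto)
    ultimately show "S \<in> sets (vimage_algebra (space M) W P)"
      by blast
  qed
  then show ?thesis
    using sets.sigma_sets_subset[of "{(\<lambda>\<omega>. f (W \<omega>)) -` A \<inter> space M | A. A \<in> sets N}" "vimage_algebra (space M) W P"]
    by auto
qed

lemma (in prob_space) indep_comp:
  assumes ind: "indep_set (sets (vimage_algebra (space M) W P)) (sets (vimage_algebra (space M) V Q))"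
  and W: "W \<in> M \<rightarrow>\<^sub>M P" and V: "V \<in> M \<rightarrow>\<^sub>M Q"
  and f: "f \<in> P \<rightarrow>\<^sub>M (N::'e measure)" and g: "g \<in> Q \<rightarrow>\<^sub>M N"
  shows "indep_var N (\<lambda>\<omega>. f (W \<omega>)) N (\<lambda>\<omega>. g (V \<omega>))"
proof -
  have rf: "random_variable N (\<lambda>\<omega>. f (W \<omega>))" using W f by measurable
  have rg: "random_variable N (\<lambda>\<omega>. g (V \<omega>))" using V g by measurable
  show ?thesis
    unfolding indep_var_eq
    using rf rg ind vimage_sub[OF W f] vimage_sub[OF V g]
    unfolding indep_sets2_eq by blast
qed




lemma cis_bounded_int: "prob_space M \<Longrightarrow> f \<in> borel_measurable M \<Longrightarrow> integrable M (\<lambda>\<omega>. cis (f \<omega>))"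
proof (rule finite_measure.integrable_const_bound[where B=1])
  assume "prob_space M" "f \<in> borel_measurable M"
  then show "finite_measure M" by (simp add: prob_space.finite_measure)
  show "(\<lambda>\<omega>. cis (f \<omega>)) \<in> borel_measurable M"
    by (rule measurable_compose[where f=f and g=cis, OF \<open>f \<in> borel_measurable M\<close>])
       (auto intro!: borel_measurable_continuous_onI continuous_intros)
qed auto

lemma (in prob_space) prod_gauss:
  fixes X :: "nat \<Rightarrow> 'a \<Rightarrow> real^'n"
  assumes ind: "indep_vars (\<lambda>_. borel) X UNIV" and mX: "\<And>t. X t \<in> borel_measurable M"
    and g: "\<And>t. gaussian_vec m S (distr M borel (X t))" and I: "finite I"
  shows "(\<integral>\<omega>. cis (\<Sum>i\<in>I. b i \<bullet> X i \<omega>) \<partial>M) =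
     cis (\<Sum>i\<in>I. b i \<bullet> m) * complex_of_real (exp (- (\<Sum>i\<in>I. b i \<bullet> (S *v b i)) / 2))"
proof -
  have meas: "(\<lambda>x. cis (b i \<bullet> x)) \<in> borel_measurable borel" for i :: nat
    by (auto intro!: borel_measurable_continuous_onI continuous_intros)
  have ind2: "indep_vars (\<lambda>_. borel) (\<lambda>i \<omega>. cis (b i \<bullet> X i \<omega>)) I"
    using indep_vars_subset[OF indep_vars_compose2[OF ind, of "\<lambda>i x. cis (b i \<bullet> x)" "\<lambda>_. borel"]]
    using meas by auto
  have "(\<integral>\<omega>. cis (\<Sum>i\<in>I. b i \<bullet> X i \<omega>) \<partial>M) = (\<integral>\<omega>. (\<Prod>i\<in>I. cis (b i \<bullet> X i \<omega>)) \<partial>M)"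
    by (simp add: cis_sum[OF I])
  also have "\<dots> = (\<Prod>i\<in>I. \<integral>\<omega>. cis (b i \<bullet> X i \<omega>) \<partial>M)"
    by (rule indep_vars_lebesgue_integral[OF I ind2])
       (auto intro!: cis_bounded_int prob_space_axioms borel_measurable_inner mX)
  also have "\<dots> = (\<Prod>i\<in>I. cis (b i \<bullet> m) * complex_of_real (exp (- (b i \<bullet> (S *v b i)) / 2)))"
    by (rule prod.cong[OF refl], rule gauss_int[OF g mX])
  also have "\<dots> = cis (\<Sum>i\<in>I. b i \<bullet> m) * complex_of_real (exp (- (\<Sum>i\<in>I. b i \<bullet> (S *v b i)) / 2))"
  proof -
    have "(\<Prod>i\<in>I. complex_of_real (exp (- (b i \<bullet> (S *v b i)) / 2))) =
       complex_of_real (\<Prod>i\<in>I. exp (- (b i \<bullet> (S *v b i)) / 2))" by simp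
    also have "\<dots> = complex_of_real (exp (\<Sum>i\<in>I. - (b i \<bullet> (S *v b i)) / 2))"
      by (simp only: exp_sum[OF I])
    also have "(\<Sum>i\<in>I. - (b i \<bullet> (S *v b i)) / 2) = - (\<Sum>i\<in>I. b i \<bullet> (S *v b i)) / 2"
      by (simp add: sum_negf sum_divide_distrib)
    finally show ?thesis by (simp only: prod.distrib cis_sum[OF I])
  qed
  finally show ?thesis .
qed




lemma charf:
  fixes M :: "'a measure" and A :: "real^'n^'n" and B :: "real^'m^'n" and G :: "real^'l^'n"
    and C :: "real^'n^'p" and mu :: "real^'l" and Psi :: "real^'p^'p"
    and w :: "nat \<Rightarrow> 'a \<Rightarrow> real^'l" and nu :: "nat \<Rightarrow> 'a \<Rightarrow> real^'p"
  assumes nm: "noise_model M mu Psi w nu" and fin: "finite J" and N: "\<forall>t\<in>J. t \<le> N"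
  shows "(\<integral>\<omega>. cis (\<Sum>t\<in>J. a t \<bullet> output_proc A B G C 0 u w nu t \<omega>) \<partial>M) =
    cis ((\<Sum>t\<in>J. a t \<bullet> (C *v (\<Sum>\<tau><t. mpow A (t - 1 - \<tau>) *v (B *v u \<tau>))))
        + (\<Sum>\<tau><N. bb A G C J a \<tau> \<bullet> mu))
    * complex_of_real (exp (- (\<Sum>\<tau><N. bb A G C J a \<tau> \<bullet> bb A G C J a \<tau>) / 2
         - (\<Sum>t\<in>J. a t \<bullet> (Psi *v a t)) / 2))"
proof -
  interpret prob_space M using nm unfolding noise_model_def by auto
  have mw: "\<And>t. w t \<in> borel_measurable M" and mnu: "\<And>t. nu t \<in> borel_measurable M"
    and gw: "\<And>t. gaussian_vec mu (mat 1) (distr M borel (w t))"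
    and gnu: "\<And>t. gaussian_vec 0 Psi (distr M borel (nu t))"
    and iw: "indep_vars (\<lambda>_. borel) w UNIV" and inu: "indep_vars (\<lambda>_. borel) nu UNIV"
    and iwn: "indep_set
       (sets (vimage_algebra (space M) (\<lambda>\<omega> t. w t \<omega>) (PiM UNIV (\<lambda>_. borel))))
       (sets (vimage_algebra (space M) (\<lambda>\<omega> t. nu t \<omega>) (PiM UNIV (\<lambda>_. borel))))"
    using nm unfolding noise_model_def by auto
  define c where "c = (\<Sum>t\<in>J. a t \<bullet> (C *v (\<Sum>\<tau><t. mpow A (t - 1 - \<tau>) *v (B *v u \<tau>))))"
  define b where "b = bb A G C J a"
  have W: "(\<lambda>\<omega> t. w t \<omega>) \<in> M \<rightarrow>\<^sub>M PiM UNIV (\<lambda>_. borel)"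
    by (rule measurable_PiM_single') (auto simp: mw measurable_space)
  have V: "(\<lambda>\<omega> t. nu t \<omega>) \<in> M \<rightarrow>\<^sub>M PiM UNIV (\<lambda>_. borel)"
    by (rule measurable_PiM_single') (auto simp: mnu measurable_space)
  have f: "(\<lambda>g. cis (\<Sum>\<tau><N. b \<tau> \<bullet> g \<tau>)) \<in> PiM UNIV (\<lambda>_. borel) \<rightarrow>\<^sub>M (borel :: complex measure)"
    by (rule measurable_compose[where g=cis, OF _ borel_measurable_continuous_onI])
      (auto intro!: borel_measurable_sum borel_measurable_inner measurable_component_singleton continuous_intros)
  have g: "(\<lambda>g. cis (\<Sum>t\<in>J. a t \<bullet> g t)) \<in> PiM UNIV (\<lambda>_. borel) \<rightarrow>\<^sub>M (borel :: complex measure)"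
    by (rule measurable_compose[where g=cis, OF _ borel_measurable_continuous_onI])
      (auto intro!: borel_measurable_sum borel_measurable_inner measurable_component_singleton continuous_intros)
  have ind: "indep_var borel (\<lambda>\<omega>. cis (\<Sum>\<tau><N. b \<tau> \<bullet> w \<tau> \<omega>)) borel (\<lambda>\<omega>. cis (\<Sum>t\<in>J. a t \<bullet> nu t \<omega>))"
    using indep_comp[OF iwn W V f g] by simp
  have pw: "cis (\<Sum>t\<in>J. a t \<bullet> output_proc A B G C 0 u w nu t \<omega>) =
     cis c * (cis (\<Sum>\<tau><N. b \<tau> \<bullet> w \<tau> \<omega>) * cis (\<Sum>t\<in>J. a t \<bullet> nu t \<omega>))" for \<omega>
    unfolding pointwise[OF fin N] c_def b_def by (simp only: cis_mult add.assoc)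
  have "(\<integral>\<omega>. cis (\<Sum>t\<in>J. a t \<bullet> output_proc A B G C 0 u w nu t \<omega>) \<partial>M) =
     cis c * ((\<integral>\<omega>. cis (\<Sum>\<tau><N. b \<tau> \<bullet> w \<tau> \<omega>) \<partial>M) * (\<integral>\<omega>. cis (\<Sum>t\<in>J. a t \<bullet> nu t \<omega>) \<partial>M))"
    unfolding pw
    by (subst integral_mult_right_zero, subst indep_var_lebesgue_integral[OF ind])
       (auto intro!: cis_bounded_int prob_space_axioms borel_measurable_sum borel_measurable_inner mw mnu)
  also have "\<dots> = cis c * ((cis (\<Sum>\<tau><N. b \<tau> \<bullet> mu) * complex_of_real (exp (- (\<Sum>\<tau><N. b \<tau> \<bullet> (mat 1 *v b \<tau>)) / 2)))
      * (cis (\<Sum>t\<in>J. a t \<bullet> 0) * complex_of_real (exp (- (\<Sum>t\<in>J. a t \<bullet> (Psi *v a t)) / 2))))"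
    by (simp only: prod_gauss[OF iw mw gw] prod_gauss[OF inu mnu gnu fin] finite_lessThan)
  also have "\<dots> = cis (c + (\<Sum>\<tau><N. b \<tau> \<bullet> mu)) * complex_of_real (exp (- (\<Sum>\<tau><N. b \<tau> \<bullet> b \<tau>) / 2
         - (\<Sum>t\<in>J. a t \<bullet> (Psi *v a t)) / 2))"
  proof -
    have e: "exp (- (\<Sum>\<tau><N. b \<tau> \<bullet> b \<tau>) / 2 - (\<Sum>t\<in>J. a t \<bullet> (Psi *v a t)) / 2)
      = exp (- (\<Sum>\<tau><N. b \<tau> \<bullet> b \<tau>) / 2) * exp (- (\<Sum>t\<in>J. a t \<bullet> (Psi *v a t)) / 2)"
      by (simp add: exp_add[symmetric])
    show ?thesis unfolding e by (simp add: cis_mult[symmetric] mult_ac)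
  qed
  finally show ?thesis unfolding c_def b_def .
qed




lemma meas_mv: "f \<in> borel_measurable M \<Longrightarrow> (\<lambda>\<omega>. (A::real^'n^'m) *v f \<omega>) \<in> borel_measurable M"
  by (rule measurable_compose[where g="\<lambda>x. A *v x", OF _ borel_measurable_continuous_onI])
     (auto intro!: continuous_intros)

lemma meas_out:
  assumes "\<And>t. w t \<in> borel_measurable M" "\<And>t. nu t \<in> borel_measurable M"
  shows "output_proc A B G C x0 u w nu t \<in> borel_measurable M"
proof -
  have "(\<lambda>\<omega>. output_proc A B G C x0 u w nu t \<omega>) \<in> borel_measurable M"
    unfolding output_proc_def state_proc_def
    by (intro borel_measurable_add meas_mv borel_measurable_sum borel_measurable_const assms)
  then show ?thesis by simp
qed

lemma from_equiv:
  fixes Y1 :: "nat \<Rightarrow> 'a \<Rightarrow> real^'p" and Y2 :: "nat \<Rightarrow> 'b \<Rightarrow> real^'p"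
  assumes eq: "stoch_equiv M1 Y1 M2 Y2" and J: "finite J"
    and m1: "\<And>t. Y1 t \<in> borel_measurable M1" and m2: "\<And>t. Y2 t \<in> borel_measurable M2"
  shows "(\<integral>\<omega>. cis (\<Sum>t\<in>J. a t \<bullet> Y1 t \<omega>) \<partial>M1) = (\<integral>\<omega>. cis (\<Sum>t\<in>J. a t \<bullet> Y2 t \<omega>) \<partial>M2)"
proof -
  define g where "g = (\<lambda>f::nat \<Rightarrow> real^'p. cis (\<Sum>t\<in>J. a t \<bullet> f t))"
  have gm: "g \<in> borel_measurable (PiM J (\<lambda>_. borel))"
    unfolding g_def
    by (rule measurable_compose[where g=cis, OF _ borel_measurable_continuous_onI])
      (auto intro!: borel_measurable_sum borel_measurable_inner measurable_component_singleton continuous_intros)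
  have r1: "(\<lambda>\<omega>. \<lambda>t\<in>J. Y1 t \<omega>) \<in> M1 \<rightarrow>\<^sub>M PiM J (\<lambda>_. borel)"
    by (rule measurable_restrict) (simp add: m1)
  have r2: "(\<lambda>\<omega>. \<lambda>t\<in>J. Y2 t \<omega>) \<in> M2 \<rightarrow>\<^sub>M PiM J (\<lambda>_. borel)"
    by (rule measurable_restrict) (simp add: m2)
  have d: "distr M1 (PiM J (\<lambda>_. borel)) (\<lambda>\<omega>. \<lambda>t\<in>J. Y1 t \<omega>) =
        distr M2 (PiM J (\<lambda>_. borel)) (\<lambda>\<omega>. \<lambda>t\<in>J. Y2 t \<omega>)"
    using eq J unfolding stoch_equiv_def by auto
  have "(\<integral>\<omega>. cis (\<Sum>t\<in>J. a t \<bullet> Y1 t \<omega>) \<partial>M1) = (\<integral>\<omega>. g (\<lambda>t\<in>J. Y1 t \<omega>) \<partial>M1)"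
    by (simp add: g_def cong: sum.cong)
  also have "\<dots> = integral\<^sup>L (distr M1 (PiM J (\<lambda>_. borel)) (\<lambda>\<omega>. \<lambda>t\<in>J. Y1 t \<omega>)) g"
    by (rule integral_distr[OF r1 gm, symmetric])
  also have "\<dots> = integral\<^sup>L (distr M2 (PiM J (\<lambda>_. borel)) (\<lambda>\<omega>. \<lambda>t\<in>J. Y2 t \<omega>)) g"
    by (simp only: d)
  also have "\<dots> = (\<integral>\<omega>. g (\<lambda>t\<in>J. Y2 t \<omega>) \<partial>M2)"
    by (rule integral_distr[OF r2 gm])
  also have "\<dots> = (\<integral>\<omega>. cis (\<Sum>t\<in>J. a t \<bullet> Y2 t \<omega>) \<partial>M2)"
    by (simp add: g_def cong: sum.cong)
  finally show ?thesis .
qed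

lemma cis_exp_eq:
  assumes "cis x1 * complex_of_real (exp r1) = cis x2 * complex_of_real (exp r2)"
  shows "r1 = r2 \<and> cis x1 = cis x2"
proof -
  have "norm (cis x1 * complex_of_real (exp r1)) = norm (cis x2 * complex_of_real (exp r2))"
    using assms by simp
  then have "exp r1 = exp r2" by (simp add: norm_mult)
  then have r: "r1 = r2" by simp
  then show ?thesis using assms by simp
qed

lemma cis_lin:
  assumes "\<And>s::real. cis (s * x) = cis (s * y)"
  shows "x = y"
proof (rule ccontr)
  assume ne: "x \<noteq> y"
  define s where "s = pi / (x - y)"
  have "s * x - s * y = s * (x - y)" by (simp add: right_diff_distrib)
  also have "\<dots> = pi" using ne unfolding s_def by simp
  finally have "s * x - s * y = pi" .
  then have "cis (s * x) / cis (s * y) = -1" by (simp add: cis_divide)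
  moreover have "cis (s * x) / cis (s * y) = 1" using assms[of s] by (simp add: cis_neq_zero)
  ultimately show False by simp
qed

definition theta where
  "theta A B G C mu J N a u = (\<Sum>t\<in>J. a t \<bullet> (C *v (\<Sum>\<tau><t. mpow A (t - 1 - \<tau>) *v (B *v u \<tau>))))
        + (\<Sum>\<tau><N. bb A G C J a \<tau> \<bullet> mu)"

definition rho where
  "rho A G C Psi J N a = (\<Sum>\<tau><N. bb A G C J a \<tau> \<bullet> bb A G C J a \<tau>) + (\<Sum>t\<in>J. a t \<bullet> (Psi *v a t))"

lemma key:
  fixes M1 :: "'a measure" and M2 :: "'b measure"
    and A1 :: "real^'n1^'n1" and B1 :: "real^'m^'n1" and G1 :: "real^'l1^'n1"
    and C1 :: "real^'n1^'p" and mu1 :: "real^'l1" and Psi1 :: "real^'p^'p"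
    and w1 :: "nat \<Rightarrow> 'a \<Rightarrow> real^'l1" and nu1 :: "nat \<Rightarrow> 'a \<Rightarrow> real^'p"
    and A2 :: "real^'n2^'n2" and B2 :: "real^'m^'n2" and G2 :: "real^'l2^'n2"
    and C2 :: "real^'n2^'p" and mu2 :: "real^'l2" and Psi2 :: "real^'p^'p"
    and w2 :: "nat \<Rightarrow> 'b \<Rightarrow> real^'l2" and nu2 :: "nat \<Rightarrow> 'b \<Rightarrow> real^'p"
  assumes noise1: "noise_model M1 mu1 Psi1 w1 nu1"
    and noise2: "noise_model M2 mu2 Psi2 w2 nu2"
    and eq: "stoch_equiv M1 (output_proc A1 B1 G1 C1 0 u w1 nu1) M2 (output_proc A2 B2 G2 C2 0 u w2 nu2)"
    and J: "finite J" and N: "\<forall>t\<in>J. t \<le> N"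
  shows "rho A1 G1 C1 Psi1 J N a = rho A2 G2 C2 Psi2 J N a \<and>
     cis (theta A1 B1 G1 C1 mu1 J N a u) = cis (theta A2 B2 G2 C2 mu2 J N a u)"
proof -
  have m1: "\<And>t. w1 t \<in> borel_measurable M1" "\<And>t. nu1 t \<in> borel_measurable M1"
    using noise1 unfolding noise_model_def by auto
  have m2: "\<And>t. w2 t \<in> borel_measurable M2" "\<And>t. nu2 t \<in> borel_measurable M2"
    using noise2 unfolding noise_model_def by auto
  have "cis (theta A1 B1 G1 C1 mu1 J N a u) * complex_of_real (exp (- (\<Sum>\<tau><N. bb A1 G1 C1 J a \<tau> \<bullet> bb A1 G1 C1 J a \<tau>) / 2
         - (\<Sum>t\<in>J. a t \<bullet> (Psi1 *v a t)) / 2))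
     = cis (theta A2 B2 G2 C2 mu2 J N a u) * complex_of_real (exp (- (\<Sum>\<tau><N. bb A2 G2 C2 J a \<tau> \<bullet> bb A2 G2 C2 J a \<tau>) / 2
         - (\<Sum>t\<in>J. a t \<bullet> (Psi2 *v a t)) / 2))"
    unfolding theta_def
    using from_equiv[OF eq J meas_out[OF m1] meas_out[OF m2], of a]
      charf[OF noise1 J N, of a A1 B1 G1 C1 u] charf[OF noise2 J N, of a A2 B2 G2 C2 u]
    by simp
  from cis_exp_eq[OF this] show ?thesis unfolding rho_def by (simp add: field_simps)
qed




lemma sym_swap: "transpose P = P \<Longrightarrow> (y::real^'p) \<bullet> (P *v x) = x \<bullet> (P *v y)"
  by (metis dot_lmul_matrix inner_commute transpose_matrix_vector)

lemma vec_eq_inner: "(\<And>x. (x::real^'p) \<bullet> a = x \<bullet> b) \<Longrightarrow> a = b"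
proof -
  assume h: "\<And>x. (x::real^'p) \<bullet> a = x \<bullet> b"
  have "(a - b) \<bullet> (a - b) = 0" using h[of "a - b"] by (simp add: inner_diff_right)
  then show "a = b" by simp
qed

lemma mat_eq_bil: "(\<And>x y. (x::real^'p) \<bullet> (P *v y) = x \<bullet> (Q *v y)) \<Longrightarrow> P = Q"
  by (metis matrix_eq vec_eq_inner)

lemma sym_quad_eq:
  fixes P Q :: "real^'p^'p"
  assumes "transpose P = P" "transpose Q = Q" "\<And>x. x \<bullet> (P *v x) = x \<bullet> (Q *v x)"
  shows "P = Q"
proof (rule mat_eq_bil)
  fix x y :: "real^'p"
  have "(x + y) \<bullet> (P *v (x + y)) = (x + y) \<bullet> (Q *v (x + y))" by (rule assms(3))
  then have "x \<bullet> (P *v x) + x \<bullet> (P *v y) + y \<bullet> (P *v x) + y \<bullet> (P *v y) =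
             x \<bullet> (Q *v x) + x \<bullet> (Q *v y) + y \<bullet> (Q *v x) + y \<bullet> (Q *v y)"
    by (simp add: matrix_vector_right_distrib inner_add_left inner_add_right)
  then show "x \<bullet> (P *v y) = x \<bullet> (Q *v y)"
    using assms(3)[of x] assms(3)[of y] sym_swap[OF assms(1), of y x] sym_swap[OF assms(2), of y x]
    by simp
qed

lemma bb_delta:
  assumes "finite J" "s \<in> J"
  shows "bb A G C J (\<lambda>r. if r = s then x else 0) \<tau> =
     (if \<tau> < s then transpose (C ** mpow A (s - 1 - \<tau>) ** G) *v x else 0)"
proof -
  have "bb A G C J (\<lambda>r. if r = s then x else 0) \<tau> =
     (\<Sum>r\<in>J. if r = s then (if \<tau> < s then transpose (C ** mpow A (s - 1 - \<tau>) ** G) *v x else 0) else 0)"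
    unfolding bb_def by (rule sum.cong) auto
  also have "\<dots> = (if \<tau> < s then transpose (C ** mpow A (s - 1 - \<tau>) ** G) *v x else 0)"
    using assms by (simp add: sum.delta)
  finally show ?thesis .
qed

lemma bb_add: "bb A G C J (\<lambda>r. a r + a' r) \<tau> = bb A G C J a \<tau> + bb A G C J a' \<tau>"
  unfolding bb_def sum.distrib[symmetric] by (rule sum.cong) (auto simp: matrix_vector_right_distrib)

lemma rho_add:
  assumes "transpose Psi = Psi"
  shows "rho A G C Psi J N (\<lambda>r. a r + a' r) = rho A G C Psi J N a + rho A G C Psi J N a'
     + 2 * (\<Sum>\<tau><N. bb A G C J a \<tau> \<bullet> bb A G C J a' \<tau>) + 2 * (\<Sum>t\<in>J. a t \<bullet> (Psi *v a' t))"
proof -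
  have e1: "bb A G C J (\<lambda>r. a r + a' r) \<tau> \<bullet> bb A G C J (\<lambda>r. a r + a' r) \<tau> =
     bb A G C J a \<tau> \<bullet> bb A G C J a \<tau> + bb A G C J a' \<tau> \<bullet> bb A G C J a' \<tau> + 2 * (bb A G C J a \<tau> \<bullet> bb A G C J a' \<tau>)" for \<tau>
    unfolding bb_add by (simp add: inner_add_left inner_add_right inner_commute)
  have e2: "(a t + a' t) \<bullet> (Psi *v (a t + a' t)) = a t \<bullet> (Psi *v a t) + a' t \<bullet> (Psi *v a' t) + 2 * (a t \<bullet> (Psi *v a' t))" for t
    using sym_swap[OF assms, of "a' t" "a t"]
    by (simp add: matrix_vector_right_distrib inner_add_left inner_add_right)
  show ?thesis unfolding rho_def e1 e2
    by (simp add: sum.distrib sum_distrib_left)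
qed

lemma cross_eval:
  assumes "s \<le> t" "t \<le> (N::nat)"
  shows "(\<Sum>\<tau><N. (if \<tau> < s then U \<tau> else 0) \<bullet> (if \<tau> < t then V \<tau> else (0::real^'l))) = (\<Sum>\<tau><s. U \<tau> \<bullet> V \<tau>)"
proof -
  have "(\<Sum>\<tau><N. (if \<tau> < s then U \<tau> else 0) \<bullet> (if \<tau> < t then V \<tau> else (0::real^'l))) =
        (\<Sum>\<tau><N. if \<tau> < s then U \<tau> \<bullet> V \<tau> else 0)"
    using assms by (intro sum.cong) auto
  also have "\<dots> = (\<Sum>\<tau><s. U \<tau> \<bullet> V \<tau>)"
    by (rule sum_lt_N[symmetric, of "{s}"]) (use assms in auto)
  finally show ?thesis .
qed

lemma theta_single:
  "theta A B G C mu {t} t (\<lambda>_. z) u =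
     z \<bullet> (C *v (\<Sum>\<tau><t. mpow A (t - 1 - \<tau>) *v (B *v u \<tau>)))
     + z \<bullet> (\<Sum>\<tau><t. (C ** mpow A (t - 1 - \<tau>) ** G) *v mu)"
  unfolding theta_def bb_def
  by (simp add: inner_sum_right dot_lmul_matrix)




theorem proposition3:
  fixes M1 :: "'a measure" and M2 :: "'b measure"
    and A1 :: "real^'n1^'n1" and B1 :: "real^'m^'n1" and G1 :: "real^'l1^'n1"
    and C1 :: "real^'n1^'p" and mu1 :: "real^'l1" and Psi1 :: "real^'p^'p"
    and w1 :: "nat \<Rightarrow> 'a \<Rightarrow> real^'l1" and nu1 :: "nat \<Rightarrow> 'a \<Rightarrow> real^'p"
    and A2 :: "real^'n2^'n2" and B2 :: "real^'m^'n2" and G2 :: "real^'l2^'n2"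
    and C2 :: "real^'n2^'p" and mu2 :: "real^'l2" and Psi2 :: "real^'p^'p"
    and w2 :: "nat \<Rightarrow> 'b \<Rightarrow> real^'l2" and nu2 :: "nat \<Rightarrow> 'b \<Rightarrow> real^'p"
    and R :: "((real^'n1) \<times> (real^'n2)) set"
  assumes noise1: "noise_model M1 mu1 Psi1 w1 nu1"
    and noise2: "noise_model M2 mu2 Psi2 w2 nu2"
    and R_sub: "subspace R"
    and equiv: "\<forall>x10 x20 (u :: nat \<Rightarrow> real^'m). (x10, x20) \<in> R \<longrightarrow>
        stoch_equiv M1 (output_proc A1 B1 G1 C1 x10 u w1 nu1)
                    M2 (output_proc A2 B2 G2 C2 x20 u w2 nu2)"
  shows "Psi1 = Psi2 \<and>
    (\<forall>t. C1 ** mpow A1 t ** B1 = C2 ** mpow A2 t ** B2) \<and>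
    (\<forall>t. (C1 ** mpow A1 t ** G1) *v mu1 = (C2 ** mpow A2 t ** G2) *v mu2) \<and>
    (\<forall>h k. C1 ** mpow A1 k ** G1 ** transpose G1 ** transpose (mpow A1 h) ** transpose C1 =
               C2 ** mpow A2 k ** G2 ** transpose G2 ** transpose (mpow A2 h) ** transpose C2)"
proof -
  have eqv: "\<And>u. stoch_equiv M1 (output_proc A1 B1 G1 C1 0 u w1 nu1) M2 (output_proc A2 B2 G2 C2 0 u w2 nu2)"
    using equiv subspace_0[OF R_sub] by (simp add: zero_prod_def)
  have K: "\<And>J N a u. finite J \<Longrightarrow> \<forall>t\<in>J. t \<le> N \<Longrightarrow>
     rho A1 G1 C1 Psi1 J N a = rho A2 G2 C2 Psi2 J N a \<and>
     cis (theta A1 B1 G1 C1 mu1 J N a u) = cis (theta A2 B2 G2 C2 mu2 J N a u)"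
    by (rule key[OF noise1 noise2 eqv])
  have sym1: "transpose Psi1 = Psi1" using noise1 unfolding noise_model_def gaussian_vec_def by blast
  have sym2: "transpose Psi2 = Psi2" using noise2 unfolding noise_model_def gaussian_vec_def by blast
  have P0: "Psi1 = Psi2"
  proof (rule sym_quad_eq[OF sym1 sym2])
    fix x :: "real^'p"
    show "x \<bullet> (Psi1 *v x) = x \<bullet> (Psi2 *v x)"
      using conjunct1[OF K[of "{0}" 0 "\<lambda>_. x" "\<lambda>_. 0"]] by (simp add: rho_def)
  qed
  define m1 where "m1 t = (\<Sum>\<tau><t. (C1 ** mpow A1 (t - 1 - \<tau>) ** G1) *v mu1)" for t
  define m2 where "m2 t = (\<Sum>\<tau><t. (C2 ** mpow A2 (t - 1 - \<tau>) ** G2) *v mu2)" for t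
  have th0: "theta A B G C mu {t} t (\<lambda>_. s *\<^sub>R x) (\<lambda>_. 0) = s * (x \<bullet> (\<Sum>\<tau><t. (C ** mpow A (t - 1 - \<tau>) ** G) *v mu))"
    for A :: "real^'n^'n" and B :: "real^'m^'n" and G :: "real^'l^'n" and C :: "real^'n^'p" and mu t s x
    unfolding theta_single by simp
  have meq: "m1 t = m2 t" for t
  proof (rule vec_eq_inner)
    fix x
    show "x \<bullet> m1 t = x \<bullet> m2 t"
    proof (rule cis_lin)
      fix s
      show "cis (s * (x \<bullet> m1 t)) = cis (s * (x \<bullet> m2 t))"
        using conjunct2[OF K[of "{t}" t "\<lambda>_. s *\<^sub>R x" "\<lambda>_. 0"]]
        unfolding th0 m1_def m2_def by simp
    qed
  qed
  have msuc1: "m1 (Suc t) = (C1 ** mpow A1 t ** G1) *v mu1 + m1 t" for t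
    unfolding m1_def by (subst sum.lessThan_Suc_shift) simp
  have msuc2: "m2 (Suc t) = (C2 ** mpow A2 t ** G2) *v mu2 + m2 t" for t
    unfolding m2_def by (subst sum.lessThan_Suc_shift) simp
  have P2: "\<forall>t. (C1 ** mpow A1 t ** G1) *v mu1 = (C2 ** mpow A2 t ** G2) *v mu2"
    using meq msuc1 msuc2 by (metis add_right_cancel)
  have P1: "\<forall>t. C1 ** mpow A1 t ** B1 = C2 ** mpow A2 t ** B2"
  proof
    fix k
    show "C1 ** mpow A1 k ** B1 = C2 ** mpow A2 k ** B2"
    proof (rule mat_eq_bil)
      fix x :: "real^'p" and v :: "real^'m"
      define u where "u = (\<lambda>\<tau>::nat. if \<tau> = 0 then v else 0)"
      have thu: "theta A B G C mu {Suc k} (Suc k) (\<lambda>_. s *\<^sub>R x) u =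
          s * (x \<bullet> ((C ** mpow A k ** B) *v v)) + s * (x \<bullet> (\<Sum>\<tau><Suc k. (C ** mpow A (Suc k - 1 - \<tau>) ** G) *v mu))"
        for A :: "real^'n^'n" and B :: "real^'m^'n" and G :: "real^'l^'n" and C :: "real^'n^'p" and mu s
        unfolding theta_single u_def
        by (subst sum.lessThan_Suc_shift) (simp add: matrix_vector_mul_assoc matrix_mul_assoc)
      show "x \<bullet> ((C1 ** mpow A1 k ** B1) *v v) = x \<bullet> ((C2 ** mpow A2 k ** B2) *v v)"
      proof (rule cis_lin)
        fix s
        have "cis (s * (x \<bullet> ((C1 ** mpow A1 k ** B1) *v v)) + s * (x \<bullet> m1 (Suc k))) =
              cis (s * (x \<bullet> ((C2 ** mpow A2 k ** B2) *v v)) + s * (x \<bullet> m2 (Suc k)))"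
          using conjunct2[OF K[of "{Suc k}" "Suc k" "\<lambda>_. s *\<^sub>R x" u]]
          unfolding thu m1_def m2_def by simp
        then show "cis (s * (x \<bullet> ((C1 ** mpow A1 k ** B1) *v v))) = cis (s * (x \<bullet> ((C2 ** mpow A2 k ** B2) *v v)))"
          unfolding meq cis_mult[symmetric] by (simp add: cis_neq_zero)
      qed
    qed
  qed
  define Q1 where "Q1 k = C1 ** mpow A1 k ** G1" for k
  define Q2 where "Q2 k = C2 ** mpow A2 k ** G2" for k
  define X1 where "X1 s d x y = (\<Sum>\<tau><s. (transpose (Q1 (s - 1 - \<tau>)) *v x) \<bullet> (transpose (Q1 (s + d - 1 - \<tau>)) *v y))" for s d x y
  define X2 where "X2 s d x y = (\<Sum>\<tau><s. (transpose (Q2 (s - 1 - \<tau>)) *v x) \<bullet> (transpose (Q2 (s + d - 1 - \<tau>)) *v y))" for s d x y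
  have Xeq: "X1 s d x y = X2 s d x y" for s d x y
  proof -
    let ?J = "{s, s + d}" and ?N = "s + (s + d)"
    let ?a = "\<lambda>r. if r = s then x else 0" and ?a' = "\<lambda>r. if r = s + d then y else 0"
    have fin: "finite ?J" and bnd: "\<forall>t\<in>?J. t \<le> ?N" by auto
    have r: "rho A1 G1 C1 Psi1 ?J ?N a = rho A2 G2 C2 Psi2 ?J ?N a" for a
      using K[OF fin bnd] by blast
    have "2 * (\<Sum>\<tau><?N. bb A1 G1 C1 ?J ?a \<tau> \<bullet> bb A1 G1 C1 ?J ?a' \<tau>) + 2 * (\<Sum>t\<in>?J. ?a t \<bullet> (Psi1 *v ?a' t)) =
          2 * (\<Sum>\<tau><?N. bb A2 G2 C2 ?J ?a \<tau> \<bullet> bb A2 G2 C2 ?J ?a' \<tau>) + 2 * (\<Sum>t\<in>?J. ?a t \<bullet> (Psi2 *v ?a' t))"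
      using r[of "\<lambda>r. ?a r + ?a' r"] r[of ?a] r[of ?a'] rho_add[OF sym1, of A1 G1 C1 ?J ?N ?a ?a']
        rho_add[OF sym2, of A2 G2 C2 ?J ?N ?a ?a'] by linarith
    then have "(\<Sum>\<tau><?N. bb A1 G1 C1 ?J ?a \<tau> \<bullet> bb A1 G1 C1 ?J ?a' \<tau>) = (\<Sum>\<tau><?N. bb A2 G2 C2 ?J ?a \<tau> \<bullet> bb A2 G2 C2 ?J ?a' \<tau>)"
      unfolding P0 by simp
    then show ?thesis
      unfolding bb_delta[OF fin insertI1] bb_delta[OF fin insertI2[OF singletonI]]
      by (simp only: cross_eval[of s "s + d" ?N] X1_def X2_def Q1_def Q2_def)
  qed
  have Xsuc1: "X1 (Suc s) d x y = x \<bullet> ((Q1 s ** transpose (Q1 (s + d))) *v y) + X1 s d x y" for s d x y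
    unfolding X1_def by (subst sum.lessThan_Suc_shift) (simp add: dot_lmul_matrix matrix_vector_mul_assoc[symmetric])
  have Xsuc2: "X2 (Suc s) d x y = x \<bullet> ((Q2 s ** transpose (Q2 (s + d))) *v y) + X2 s d x y" for s d x y
    unfolding X2_def by (subst sum.lessThan_Suc_shift) (simp add: dot_lmul_matrix matrix_vector_mul_assoc[symmetric])
  have Kle: "Q1 s ** transpose (Q1 (s + d)) = Q2 s ** transpose (Q2 (s + d))" for s d
    by (rule mat_eq_bil) (metis Xeq Xsuc1 Xsuc2 add_right_cancel)
  have Kall: "Q1 k ** transpose (Q1 h) = Q2 k ** transpose (Q2 h)" for k h
  proof (cases "k \<le> h")
    case True then show ?thesis using Kle[of k "h - k"] by simp
  next
    case False
    then have "Q1 h ** transpose (Q1 k) = Q2 h ** transpose (Q2 k)" using Kle[of h "k - h"] by simp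
    then have "transpose (Q1 h ** transpose (Q1 k)) = transpose (Q2 h ** transpose (Q2 k))" by simp
    then show ?thesis by (simp add: matrix_transpose_mul)
  qed
  have P3: "\<forall>h k. C1 ** mpow A1 k ** G1 ** transpose G1 ** transpose (mpow A1 h) ** transpose C1 =
               C2 ** mpow A2 k ** G2 ** transpose G2 ** transpose (mpow A2 h) ** transpose C2"
    using Kall unfolding Q1_def Q2_def by (simp add: matrix_transpose_mul matrix_mul_assoc)
  show ?thesis using P0 P1 P2 P3 by blast
qed


end
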